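(* Let $n\geq 3$ and let $\rho: B_n \rightarrow GL_n(\mathbb{C})$ be a non-trivial homogeneous $2$-local representation of $B_n$. Let $\hat{\rho}: SM_n \rightarrow M_n(\mathbb{C})$ be a $\Phi$-type extension of $\rho$ to $SM_n$. Then $\hat{\rho}$ is equivalent to one of the following three representations, where for $1\le i\le n-1$ and $X\in M_2(\mathbb{C})$, $s\in\mathbb{C}$ we write $E_i(s;X)=\mathrm{diag}(sI_{i-1},X,sI_{n-i-1})$ and $D_i(X)=E_i(1;X)$: (1) $\hat{\rho}_1(\sigma_i)=D_i\begin{pmatrix} a&\frac{1-a}{c}\\ c&0\end{pmatrix}$ and $\hat{\rho}_1(\tau_i)=E_i\left(u+v+w;\begin{pmatrix} ua+w & \frac{u(1-a)+v}{c}\\ uc+\frac{vc}{1-a} & \frac{-va}{1-a}+w\end{pmatrix}\right)$, where $a,c,u,v,w\in\mathbb{C}$, $a\neq 1$, $c\neq 0$; (2) $\hat{\rho}_2(\sigma_i)=D_i\begin{pmatrix} 0&\frac{1-d}{c}\\ c&d\end{pmatrix}$ and $\hat{\rho}_2(\tau_i)=E_i\left(u+v+w;\begin{pmatrix} \frac{-vd}{1-d}+w & \frac{u(1-d)+v}{c}\\ uc+\frac{vc}{1-d} & ud+w\end{pmatrix}\right)$, where $c,d,u,v,w\in\mathbb{C}$, $d\neq 1$, $c\neq 0$; (3) $\hat{\rho}_3(\sigma_i)=D_i\begin{pmatrix} 0&b\\ c&0\end{pmatrix}$ and $\hat{\rho}_3(\tau_i)=E_i\left(u+v+w;\begin{pmatrix}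 w & ub+\frac{v}{c}\\ uc+\frac{v}{b} & w\end{pmatrix}\right)$, where $b,c,u,v,w\in\mathbb{C}$, $b\neq 0$, $c\neq 0$; in each case for all $1\le i\le n-1$.
   Context: The braid group $B_n$ has generators $\sigma_1,\dots,\sigma_{n-1}$ with relations $\sigma_i\sigma_{i+1}\sigma_i=\sigma_{i+1}\sigma_i\sigma_{i+1}$ ($1\le i\le n-2$) and $\sigma_i\sigma_j=\sigma_j\sigma_i$ ($|i-j|\ge2$). The singular braid monoid $SM_n$ is the monoid generated by $\sigma_1^{\pm1},\dots,\sigma_{n-1}^{\pm1},\tau_1,\dots,\tau_{n-1}$ subject to $\sigma_i\sigma_i^{-1}=\sigma_i^{-1}\sigma_i=1$, the braid relations above, and $\tau_i\tau_j=\tau_j\tau_i$, $\tau_i\sigma_j=\sigma_j\tau_i$ for $|i-j|\ge 2$, $\tau_i\sigma_i=\sigma_i\tau_i$, and $\sigma_i\sigma_{i+1}\tau_i=\tau_{i+1}\sigma_i\sigma_{i+1}$, $\sigma_{i+1}\sigma_i\tau_{i+1}=\tau_i\sigma_{i+1}\sigma_i$ for $1\le i\le n-2$. A representation $\rho:B_n\to GL_n(\mathbb{C})$ is homogeneous $2$-local if there is $M\in M_2(\mathbb{C})$ with $\rho(\sigma_i)=\mathrm{diag}(I_{i-1},M,I_{n-i-1})$ for all $1\le i\le n-1$; "non-trivial" means not sending every $\sigma_i$ to the identity. A $\Phi$-type extension of $\rho$ to $SM_n$ is a monoid homomorphism $\hat\rho:SM_n\to M_n(\mathbb{C})$ for which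 there exist $u,v,w\in\mathbb{C}$ with $\hat\rho(\sigma_i^{\pm1})=\rho(\sigma_i)^{\pm1}$ and $\hat\rho(\tau_i)=u\rho(\sigma_i)+v\rho(\sigma_i)^{-1}+wI_n$ for all $1\le i\le n-1$ (any such choice of $u,v,w$ defines a representation of $SM_n$). Two representations are equivalent if they are conjugate by a fixed invertible matrix. *)

theory Defs
  imports "Jordan_Normal_Form.Matrix"
begin

text \<open>Matrices are Jordan_Normal_Form matrices; row/column indices are 0-based,
  so the 2x2 block of the i-th generator (1 <= i <= n-1) sits in rows/columns i-1, i.\<close>

text \<open>E_i(s;X) = diag(s I_{i-1}, X, s I_{n-i-1}) as an n x n matrix.\<close>
definition blockE :: "nat \<Rightarrow> nat \<Rightarrow> complex \<Rightarrow> complex mat \<Rightarrow> complex mat" where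
  "blockE n i s X = mat n n (\<lambda>(r, c).
     if i - 1 \<le> r \<and> r \<le> i \<and> i - 1 \<le> c \<and> c \<le> i then X $$ (r - (i - 1), c - (i - 1))
     else if r = c then s else 0)"

definition blockD :: "nat \<Rightarrow> nat \<Rightarrow> complex mat \<Rightarrow> complex mat" where
  "blockD n i X = blockE n i 1 X"

definition minv :: "nat \<Rightarrow> complex mat \<Rightarrow> complex mat" where
  "minv n A = (SOME B. B \<in> carrier_mat n n \<and> A * B = 1\<^sub>m n \<and> B * A = 1\<^sub>m n)"

definition mat2 :: "complex \<Rightarrow> complex \<Rightarrow> complex \<Rightarrow> complex \<Rightarrow> complex mat" where
  "mat2 a b c d = mat 2 2 (\<lambda>(r, s). if r = 0 then (if s = 0 then a else b) else (if s = 0 then c else d))"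

text \<open>A representation B_n -> GL_n(C), given (via the standard presentation of B_n)
  by the images S i of the generators sigma_i, 1 <= i <= n-1: invertible n x n matrices
  satisfying the braid relations.\<close>
definition braid_rep :: "nat \<Rightarrow> (nat \<Rightarrow> complex mat) \<Rightarrow> bool" where
  "braid_rep n S \<longleftrightarrow>
     (\<forall>i\<in>{1..n-1}. S i \<in> carrier_mat n n \<and> invertible_mat (S i)) \<and>
     (\<forall>i\<in>{1..n-2}. S i * S (i+1) * S i = S (i+1) * S i * S (i+1)) \<and>
     (\<forall>i\<in>{1..n-1}. \<forall>j\<in>{1..n-1}. (i \<ge> j + 2 \<or> j \<ge> i + 2) \<longrightarrow> S i * S j = S j * S i)"

text \<open>Homogeneous 2-local: a single 2x2 matrix M with rho(sigma_i) = diag(I_{i-1}, M, I_{n-i-1}).\<close>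
definition hom_2local :: "nat \<Rightarrow> (nat \<Rightarrow> complex mat) \<Rightarrow> bool" where
  "hom_2local n S \<longleftrightarrow> (\<exists>M \<in> carrier_mat 2 2. \<forall>i\<in>{1..n-1}. S i = blockD n i M)"

definition nontrivial_rep :: "nat \<Rightarrow> (nat \<Rightarrow> complex mat) \<Rightarrow> bool" where
  "nontrivial_rep n S \<longleftrightarrow> (\<exists>i\<in>{1..n-1}. S i \<noteq> 1\<^sub>m n)"

definition phi_tau :: "nat \<Rightarrow> (nat \<Rightarrow> complex mat) \<Rightarrow> complex \<Rightarrow> complex \<Rightarrow> complex \<Rightarrow> nat \<Rightarrow> complex mat" where
  "phi_tau n S u v w i = u \<cdot>\<^sub>m S i + v \<cdot>\<^sub>m minv n (S i) + w \<cdot>\<^sub>m 1\<^sub>m n"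

text \<open>Two representations of SM_n, given by images (Sg, Sginv, Tg) of the generators
  sigma_i, sigma_i^{-1}, tau_i, are equivalent if conjugate by one fixed invertible matrix.\<close>
definition equiv_SM :: "nat \<Rightarrow> (nat \<Rightarrow> complex mat) \<Rightarrow> (nat \<Rightarrow> complex mat) \<Rightarrow> (nat \<Rightarrow> complex mat)
     \<Rightarrow> (nat \<Rightarrow> complex mat) \<Rightarrow> (nat \<Rightarrow> complex mat) \<Rightarrow> (nat \<Rightarrow> complex mat) \<Rightarrow> bool" where
  "equiv_SM n S1 S1i T1 S2 S2i T2 \<longleftrightarrow>
     (\<exists>P \<in> carrier_mat n n. \<exists>Q \<in> carrier_mat n n. P * Q = 1\<^sub>m n \<and> Q * P = 1\<^sub>m n \<and>
        (\<forall>i\<in>{1..n-1}. P * S1 i * Q = S2 i \<and> P * S1i i * Q = S2i i \<and> P * T1 i * Q = T2 i))"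

end

theory Submission imports Defs begin

lemma mult_entry:
  "dim_col A = n \<Longrightarrow> dim_row B = n \<Longrightarrow> i < dim_row A \<Longrightarrow> j < dim_col B \<Longrightarrow>
   (A * B) $$ (i,j) = (\<Sum>k<n. A $$ (i,k) * B $$ (k,j))"
  by (simp add: scalar_prod_def lessThan_atLeast0)

lemma blockE_carrier[simp]: "blockE n i s X \<in> carrier_mat n n"
  and blockE_dim[simp]: "dim_row (blockE n i s X) = n" "dim_col (blockE n i s X) = n"
  by (auto simp: blockE_def)

lemma blockE_index:
  "r < n \<Longrightarrow> c < n \<Longrightarrow> blockE n i s X $$ (r,c) =
    (if i - 1 \<le> r \<and> r \<le> i \<and> i - 1 \<le> c \<and> c \<le> i then X $$ (r - (i - 1), c - (i - 1))
     else if r = c then s else 0)"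
  by (simp add: blockE_def)

lemma mult2_entry:
  assumes "X \<in> carrier_mat 2 2" "Y \<in> carrier_mat 2 2" "p < 2" "q < 2"
  shows "(X * Y) $$ (p,q) = X $$ (p,0) * Y $$ (0,q) + X $$ (p,1) * Y $$ (1,q)"
proof -
  have "(X * Y) $$ (p,q) = (\<Sum>k<2. X $$ (p,k) * Y $$ (k,q))"
    using assms by (intro mult_entry) auto
  thus ?thesis by (simp add: numeral_2_eq_2 lessThan_Suc algebra_simps)
qed

lemma blockE_mult:
  assumes i: "1 \<le> i" "i < n" and X: "X \<in> carrier_mat 2 2" and Y: "Y \<in> carrier_mat 2 2"
  shows "blockE n i s X * blockE n i t Y = blockE n i (s*t) (X*Y)"
proof (rule eq_matI)
  fix r q assume "r < dim_row (blockE n i (s*t) (X*Y))" "q < dim_col (blockE n i (s*t) (X*Y))"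
  hence r: "r < n" and q: "q < n" by auto
  define f where "f k = blockE n i s X $$ (r,k) * blockE n i t Y $$ (k,q)" for k
  have eq: "(blockE n i s X * blockE n i t Y) $$ (r,q) = (\<Sum>k<n. f k)"
    unfolding f_def using r q by (intro mult_entry) auto
  show "(blockE n i s X * blockE n i t Y) $$ (r,q) = blockE n i (s*t) (X*Y) $$ (r,q)"
  proof (cases "r = i - 1 \<or> r = i")
    case True
    have "(\<Sum>k<n. f k) = (\<Sum>k\<in>{i-1,i}. f k)"
    proof (rule sum.mono_neutral_right)
      show "\<forall>k\<in>{..<n} - {i - 1, i}. f k = 0"
      proof
        fix k assume k: "k \<in> {..<n} - {i - 1, i}"
        hence "\<not> (i - 1 \<le> k \<and> k \<le> i)" "r \<noteq> k" using True by auto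
        hence "blockE n i s X $$ (r,k) = 0" using k r by (subst blockE_index) auto
        thus "f k = 0" by (simp add: f_def)
      qed
    qed (use i in auto)
    also have "\<dots> = f (i-1) + f i" using i by simp
    finally have s: "(blockE n i s X * blockE n i t Y) $$ (r,q) = f (i-1) + f i" using eq by simp
    show ?thesis
    proof (cases "q = i - 1 \<or> q = i")
      case True2: True
      have rr: "r - (i - 1) < 2" "q - (i - 1) < 2" using True True2 i by auto
      have "f (i-1) + f i = X $$ (r - (i-1), 0) * Y $$ (0, q - (i-1)) + X $$ (r - (i-1), 1) * Y $$ (1, q - (i-1))"
        unfolding f_def using True True2 i r q by (subst blockE_index, simp, simp)+ (auto simp: Suc_diff_le)
      also have "\<dots> = (X*Y) $$ (r - (i-1), q - (i-1))"
        by (rule mult2_entry[OF X Y rr, symmetric])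
      also have "\<dots> = blockE n i (s*t) (X*Y) $$ (r,q)"
      proof -
        have c: "i-1 \<le> r \<and> r \<le> i \<and> i-1 \<le> q \<and> q \<le> i" using True True2 by auto
        show ?thesis by (subst blockE_index[OF r q]) (use c in simp)
      qed
      finally show ?thesis using s by simp
    next
      case False2: False
      have "f (i-1) = 0" "f i = 0" unfolding f_def using True False2 i r q
        by (subst (2) blockE_index; auto)+
      moreover have "blockE n i (s*t) (X*Y) $$ (r,q) = 0" using True False2 i r q
        by (subst blockE_index) auto
      ultimately show ?thesis using s by simp
    qed
  next
    case False
    have "(\<Sum>k<n. f k) = (\<Sum>k<n. if k = r then s * blockE n i t Y $$ (r,q) else 0)"
      by (rule sum.cong) (use False r in \<open>auto simp: f_def blockE_index\<close>)
    also have "\<dots> = s * blockE n i t Y $$ (r,q)" using r by simp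
    finally show ?thesis using False i r q by (auto simp: eq blockE_index)
  qed
qed auto

lemma blockE_lin:
  assumes X: "X \<in> carrier_mat 2 2" and Y: "Y \<in> carrier_mat 2 2"
  shows "u \<cdot>\<^sub>m blockE n i s X + v \<cdot>\<^sub>m blockE n i t Y = blockE n i (u*s+v*t) (u \<cdot>\<^sub>m X + v \<cdot>\<^sub>m Y)"
proof (rule eq_matI)
  fix r q assume "r < dim_row (blockE n i (u*s+v*t) (u \<cdot>\<^sub>m X + v \<cdot>\<^sub>m Y))"
    "q < dim_col (blockE n i (u*s+v*t) (u \<cdot>\<^sub>m X + v \<cdot>\<^sub>m Y))"
  hence r: "r < n" and q: "q < n" by auto
  show "(u \<cdot>\<^sub>m blockE n i s X + v \<cdot>\<^sub>m blockE n i t Y) $$ (r, q) = blockE n i (u*s+v*t) (u \<cdot>\<^sub>m X + v \<cdot>\<^sub>m Y) $$ (r, q)"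
  proof (cases "i - 1 \<le> r \<and> r \<le> i \<and> i - 1 \<le> q \<and> q \<le> i")
    case True
    hence rr: "r - (i-1) < 2" "q - (i-1) < 2" by auto
    have L1: "blockE n i s X $$ (r,q) = X $$ (r-(i-1), q-(i-1))"
      by (simp only: blockE_index[OF r q] if_P[OF True])
    have L2: "blockE n i t Y $$ (r,q) = Y $$ (r-(i-1), q-(i-1))"
      by (simp only: blockE_index[OF r q] if_P[OF True])
    have L3: "blockE n i (u*s+v*t) (u \<cdot>\<^sub>m X + v \<cdot>\<^sub>m Y) $$ (r,q) = (u \<cdot>\<^sub>m X + v \<cdot>\<^sub>m Y) $$ (r-(i-1), q-(i-1))"
      by (simp only: blockE_index[OF r q] if_P[OF True])
    show ?thesis using r q rr X Y by (simp add: L1 L2 L3)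
  next
    case False
    have L1: "blockE n i s X $$ (r,q) = (if r = q then s else 0)"
      by (simp only: blockE_index[OF r q] if_not_P[OF False])
    have L2: "blockE n i t Y $$ (r,q) = (if r = q then t else 0)"
      by (simp only: blockE_index[OF r q] if_not_P[OF False])
    have L3: "blockE n i (u*s+v*t) (u \<cdot>\<^sub>m X + v \<cdot>\<^sub>m Y) $$ (r,q) = (if r = q then u*s+v*t else 0)"
      by (simp only: blockE_index[OF r q] if_not_P[OF False])
    show ?thesis using r q by (simp add: L1 L2 L3)
  qed
qed auto

lemma blockE_add:
  assumes X: "X \<in> carrier_mat 2 2" and Y: "Y \<in> carrier_mat 2 2"
  shows "blockE n i s X + blockE n i t Y = blockE n i (s+t) (X + Y)"
proof (rule eq_matI)
  fix r q assume "r < dim_row (blockE n i (s+t) (X + Y))"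
    "q < dim_col (blockE n i (s+t) (X + Y))"
  hence r: "r < n" and q: "q < n" by auto
  show "(blockE n i s X + blockE n i t Y) $$ (r, q) = blockE n i (s+t) (X + Y) $$ (r, q)"
  proof (cases "i - 1 \<le> r \<and> r \<le> i \<and> i - 1 \<le> q \<and> q \<le> i")
    case True
    hence rr: "r - (i-1) < 2" "q - (i-1) < 2" by auto
    have L1: "blockE n i s X $$ (r,q) = X $$ (r-(i-1), q-(i-1))"
      by (simp only: blockE_index[OF r q] if_P[OF True])
    have L2: "blockE n i t Y $$ (r,q) = Y $$ (r-(i-1), q-(i-1))"
      by (simp only: blockE_index[OF r q] if_P[OF True])
    have L3: "blockE n i (s+t) (X + Y) $$ (r,q) = (X + Y) $$ (r-(i-1), q-(i-1))"
      by (simp only: blockE_index[OF r q] if_P[OF True])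
    show ?thesis using r q rr X Y by (simp add: L1 L2 L3)
  next
    case False
    have L1: "blockE n i s X $$ (r,q) = (if r = q then s else 0)"
      by (simp only: blockE_index[OF r q] if_not_P[OF False])
    have L2: "blockE n i t Y $$ (r,q) = (if r = q then t else 0)"
      by (simp only: blockE_index[OF r q] if_not_P[OF False])
    have L3: "blockE n i (s+t) (X + Y) $$ (r,q) = (if r = q then s+t else 0)"
      by (simp only: blockE_index[OF r q] if_not_P[OF False])
    show ?thesis using r q by (simp add: L1 L2 L3)
  qed
qed auto

lemma blockE_smult:
  assumes X: "X \<in> carrier_mat 2 2" 
  shows "u \<cdot>\<^sub>m blockE n i s X = blockE n i (u*s) (u \<cdot>\<^sub>m X)"
proof (rule eq_matI)
  fix r q assume "r < dim_row (blockE n i (u*s) (u \<cdot>\<^sub>m X))"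
    "q < dim_col (blockE n i (u*s) (u \<cdot>\<^sub>m X))"
  hence r: "r < n" and q: "q < n" by auto
  show "(u \<cdot>\<^sub>m blockE n i s X) $$ (r, q) = blockE n i (u*s) (u \<cdot>\<^sub>m X) $$ (r, q)"
  proof (cases "i - 1 \<le> r \<and> r \<le> i \<and> i - 1 \<le> q \<and> q \<le> i")
    case True
    hence rr: "r - (i-1) < 2" "q - (i-1) < 2" by auto
    have L1: "blockE n i s X $$ (r,q) = X $$ (r-(i-1), q-(i-1))"
      by (simp only: blockE_index[OF r q] if_P[OF True])
    have L3: "blockE n i (u*s) (u \<cdot>\<^sub>m X) $$ (r,q) = (u \<cdot>\<^sub>m X) $$ (r-(i-1), q-(i-1))"
      by (simp only: blockE_index[OF r q] if_P[OF True])
    show ?thesis using r q rr X by (simp add: L1 L3)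
  next
    case False
    have L1: "blockE n i s X $$ (r,q) = (if r = q then s else 0)"
      by (simp only: blockE_index[OF r q] if_not_P[OF False])
    have L3: "blockE n i (u*s) (u \<cdot>\<^sub>m X) $$ (r,q) = (if r = q then u*s else 0)"
      by (simp only: blockE_index[OF r q] if_not_P[OF False])
    show ?thesis using r q by (simp add: L1 L3)
  qed
qed auto

lemma one_blockE: "1 \<le> i \<Longrightarrow> 1\<^sub>m n = blockE n i 1 (1\<^sub>m 2)"
proof (rule eq_matI)
  fix r q assume "1 \<le> i" "r < dim_row (blockE n i 1 (1\<^sub>m 2))" "q < dim_col (blockE n i 1 (1\<^sub>m 2))"
  thus "1\<^sub>m n $$ (r, q) = blockE n i 1 (1\<^sub>m 2) $$ (r, q)"
    by (cases "i - 1 \<le> r \<and> r \<le> i \<and> i - 1 \<le> q \<and> q \<le> i") (auto simp: blockE_index)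
qed auto

lemma minv_unique:
  assumes "A \<in> carrier_mat n n" "B \<in> carrier_mat n n" "A * B = 1\<^sub>m n" "B * A = 1\<^sub>m n"
  shows "minv n A = B"
proof -
  have ex: "\<exists>B. B \<in> carrier_mat n n \<and> A * B = 1\<^sub>m n \<and> B * A = 1\<^sub>m n" using assms by blast
  define C where "C = minv n A"
  have C: "C \<in> carrier_mat n n" "A * C = 1\<^sub>m n" "C * A = 1\<^sub>m n"
    using someI_ex[OF ex] unfolding C_def minv_def by auto
  have "C = C * (A * B)" by (subst assms(3)) (simp add: right_mult_one_mat[OF C(1)])
  also have "\<dots> = (C * A) * B" using C(1) assms(1,2) by (rule assoc_mult_mat[symmetric])
  also have "\<dots> = B" by (subst C(3)) (simp add: left_mult_one_mat[OF assms(2)])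
  finally show ?thesis unfolding C_def .
qed

lemma mat2_carrier[simp]: "mat2 a b c d \<in> carrier_mat 2 2"
  by (simp add: mat2_def)

lemma mat2_index[simp]: "mat2 a b c d $$ (0,0) = a" "mat2 a b c d $$ (0,1) = b"
  "mat2 a b c d $$ (1,0) = c" "mat2 a b c d $$ (1,1) = d"
  "mat2 a b c d $$ (0,Suc 0) = b"
  "mat2 a b c d $$ (Suc 0,0) = c" "mat2 a b c d $$ (Suc 0,Suc 0) = d"
  "dim_row (mat2 a b c d) = 2" "dim_col (mat2 a b c d) = 2"
  by (simp_all add: mat2_def)

lemma mat2_eta: "X \<in> carrier_mat 2 2 \<Longrightarrow> X = mat2 (X$$(0,0)) (X$$(0,1)) (X$$(1,0)) (X$$(1,1))"
  by (rule eq_matI) (auto simp: mat2_def less_2_cases_iff)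

lemma mat2_mult: "mat2 a b c d * mat2 a' b' c' d' = mat2 (a*a'+b*c') (a*b'+b*d') (c*a'+d*c') (c*b'+d*d')"
  by (rule eq_matI) (auto simp del: index_mult_mat simp add: index_mult_mat(2,3) mult2_entry less_2_cases_iff)

lemma mat2_lin: "u \<cdot>\<^sub>m mat2 a b c d + v \<cdot>\<^sub>m mat2 a' b' c' d' = mat2 (u*a+v*a') (u*b+v*b') (u*c+v*c') (u*d+v*d')"
  by (rule eq_matI) (auto simp: less_2_cases_iff)

lemma mat2_one: "1\<^sub>m 2 = mat2 1 0 0 1"
  by (rule eq_matI) (auto simp: less_2_cases_iff)

lemma blockD_id: "1 \<le> i \<Longrightarrow> blockD n i (mat2 1 0 0 1) = 1\<^sub>m n"
  by (simp add: blockD_def one_blockE mat2_one)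

lemma reduce3:
  assumes A: "A \<in> carrier_mat n n" and B: "B \<in> carrier_mat n n" and n: "3 \<le> n"
    and r: "r < n" and s: "s < n" and z: "\<And>k. 3 \<le> k \<Longrightarrow> k < n \<Longrightarrow> A$$(r,k) * B$$(k,s) = 0"
  shows "(A*B)$$(r,s) = (\<Sum>k<3. A$$(r,k) * B$$(k,s))"
proof -
  have "(A*B)$$(r,s) = (\<Sum>k<n. A$$(r,k) * B$$(k,s))" using A B r s by (intro mult_entry) auto
  also have "\<dots> = (\<Sum>k<3. A$$(r,k) * B$$(k,s))"
    by (rule sum.mono_neutral_right) (use n z in auto)
  finally show ?thesis .
qed

lemma sum3: "(\<Sum>k<3::nat. f k) = f 0 + f 1 + (f 2 :: complex)"
  by (simp add: numeral_3_eq_3 lessThan_Suc numeral_2_eq_2)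

lemma triple:
  assumes A: "A \<in> carrier_mat n n" and B: "B \<in> carrier_mat n n" and C: "C \<in> carrier_mat n n"
    and n: "3 \<le> n" and r: "r < 3" and s: "s < 3"
    and zA: "\<And>l. 3 \<le> l \<Longrightarrow> l < n \<Longrightarrow> A$$(r,l) = 0"
    and zC: "\<And>k. 3 \<le> k \<Longrightarrow> k < n \<Longrightarrow> C$$(k,s) = (0::complex)"
  shows "(A*B*C)$$(r,s) = (\<Sum>k<3. (\<Sum>l<3. A$$(r,l) * B$$(l,k)) * C$$(k,s))"
proof -
  have "(A*B*C)$$(r,s) = (\<Sum>k<3. (A*B)$$(r,k) * C$$(k,s))"
    using reduce3[of "A*B" n C r s] A B C n r s zC by auto
  also have "\<dots> = (\<Sum>k<3. (\<Sum>l<3. A$$(r,l) * B$$(l,k)) * C$$(k,s))"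
  proof (rule sum.cong)
    fix k assume "k \<in> {..<3::nat}"
    hence "(A*B)$$(r,k) = (\<Sum>l<3. A$$(r,l) * B$$(l,k))"
      using reduce3[of A n B r k] A B n r zA by auto
    thus "(A*B)$$(r,k) * C$$(k,s) = (\<Sum>l<3. A$$(r,l) * B$$(l,k)) * C$$(k,s)" by simp
  qed simp
  finally show ?thesis .
qed

lemma far0:
  assumes "i \<in> {1,2}" "r < 3" "3 \<le> l" "l < n"
  shows "blockE n i s X $$ (r,l) = 0" "blockE n i s X $$ (l,r) = 0"
  using assms by (auto simp: blockE_index)

lemma braid_eqs:
  assumes n: "3 \<le> n"
    and eq: "blockD n 1 (mat2 a b c d) * blockD n 2 (mat2 a b c d) * blockD n 1 (mat2 a b c d)
           = blockD n 2 (mat2 a b c d) * blockD n 1 (mat2 a b c d) * blockD n 2 (mat2 a b c d)"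
  shows "a*(a+b*c-1) = 0 \<and> a*b*d = 0 \<and> a*c*d = 0 \<and> a*d*(d-a) = 0 \<and> d*(b*c+d-1) = 0"
proof -
  define D1 where "D1 = blockD n 1 (mat2 a b c d)"
  define D2 where "D2 = blockD n 2 (mat2 a b c d)"
  have c: "D1 \<in> carrier_mat n n" "D2 \<in> carrier_mat n n" by (simp_all add: D1_def D2_def blockD_def)
  have z: "\<And>r l. r < 3 \<Longrightarrow> 3 \<le> l \<Longrightarrow> l < n \<Longrightarrow> D1 $$ (r,l) = 0 \<and> D1 $$ (l,r) = 0 \<and> D2 $$ (r,l) = 0 \<and> D2 $$ (l,r) = 0"
    unfolding D1_def D2_def blockD_def using far0 by auto
  have T1: "(D1*D2*D1)$$(r,s) = (\<Sum>k<3. (\<Sum>l<3. D1$$(r,l) * D2$$(l,k)) * D1$$(k,s))"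
    if "r < 3" "s < 3" for r s using that c n z by (intro triple) auto
  have T2: "(D2*D1*D2)$$(r,s) = (\<Sum>k<3. (\<Sum>l<3. D2$$(r,l) * D1$$(l,k)) * D2$$(k,s))"
    if "r < 3" "s < 3" for r s using that c n z by (intro triple) auto
  have E: "(\<Sum>k<3. (\<Sum>l<3. D1$$(r,l) * D2$$(l,k)) * D1$$(k,s)) = (\<Sum>k<3. (\<Sum>l<3. D2$$(r,l) * D1$$(l,k)) * D2$$(k,s))"
    if "r < 3" "s < 3" for r s
  proof -
    have "(D1*D2*D1)$$(r,s) = (D2*D1*D2)$$(r,s)" using eq by (simp add: D1_def D2_def)
    thus ?thesis using T1[OF that] T2[OF that] by simp
  qed
  have n0: "0 < n" "1 < n" "2 < n" using n by auto
  have e00: "a*(a+b*c-1) = 0" using E[of 0 0] n0 by (simp add: sum3 D1_def D2_def blockD_def blockE_index algebra_simps)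
  have e01: "a*b*d = 0" using E[of 0 1] n0 by (simp add: sum3 D1_def D2_def blockD_def blockE_index algebra_simps)
  have e10: "a*c*d = 0" using E[of 1 0] n0 by (simp add: sum3 D1_def D2_def blockD_def blockE_index algebra_simps)
  have e11: "a*d*(d-a) = 0" using E[of 1 1] n0 by (simp add: sum3 D1_def D2_def blockD_def blockE_index algebra_simps)
  have e22: "d*(b*c+d-1) = 0" using E[of 2 2] n0 by (simp add: sum3 D1_def D2_def blockD_def blockE_index algebra_simps)
  show ?thesis using e00 e01 e10 e11 e22 by blast
qed

lemma inv_row:
  assumes A: "A \<in> carrier_mat n n" and inv: "invertible_mat A" and r: "r < n"
    and z: "\<forall>k<n. A $$ (r,k) = 0"
  shows False
proof -
  obtain B where AB: "A * B = 1\<^sub>m n" and BA: "B * A = 1\<^sub>m (dim_row B)"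
    using inv A unfolding invertible_mat_def inverts_mat_def by auto
  have dB: "dim_row B = n" "dim_col B = n"
    using AB BA A by (metis carrier_matD(2) index_mult_mat(3) index_one_mat(3))+
  have "(A*B) $$ (r,r) = (\<Sum>k<n. A$$(r,k) * B$$(k,r))" using A dB r by (intro mult_entry) auto
  also have "\<dots> = 0" using z by simp
  finally show False using AB r by simp
qed

lemma inv_col:
  assumes A: "A \<in> carrier_mat n n" and inv: "invertible_mat A" and r: "r < n"
    and z: "\<forall>k<n. A $$ (k,r) = 0"
  shows False
proof -
  obtain B where AB: "A * B = 1\<^sub>m n" and BA: "B * A = 1\<^sub>m (dim_row B)"
    using inv A unfolding invertible_mat_def inverts_mat_def by auto
  have dB: "dim_row B = n" "dim_col B = n"
    using AB BA A by (metis carrier_matD(2) index_mult_mat(3) index_one_mat(3))+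
  have "(B*A) $$ (r,r) = (\<Sum>k<n. B$$(r,k) * A$$(k,r))" using A dB r by (intro mult_entry) auto
  also have "\<dots> = 0" using z by simp
  finally show False using BA dB r by simp
qed

lemma mat2_smult: "u \<cdot>\<^sub>m mat2 a b c d = mat2 (u*a) (u*b) (u*c) (u*d)"
  by (rule eq_matI) (auto simp: less_2_cases_iff)

lemma mat2_add: "mat2 a b c d + mat2 a' b' c' d' = mat2 (a+a') (b+b') (c+c') (d+d')"
  by (rule eq_matI) (auto simp: less_2_cases_iff)

lemma equiv_main:
  assumes S: "\<forall>i\<in>{1..n-1}. S i = blockD n i M" and M: "M \<in> carrier_mat 2 2" and N: "N \<in> carrier_mat 2 2"
    and MN: "M * N = 1\<^sub>m 2" and NM: "N * M = 1\<^sub>m 2"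
    and T: "\<forall>i\<in>{1..n-1}. T i = blockE n i (u+v+w) (u \<cdot>\<^sub>m M + v \<cdot>\<^sub>m N + w \<cdot>\<^sub>m 1\<^sub>m 2)"
  shows "equiv_SM n S (\<lambda>i. minv n (S i)) (phi_tau n S u v w) (\<lambda>i. blockD n i M) (\<lambda>i. minv n (blockD n i M)) T"
proof -
  have key: "1\<^sub>m n * S i * 1\<^sub>m n = blockD n i M \<and> 1\<^sub>m n * minv n (S i) * 1\<^sub>m n = minv n (blockD n i M) \<and> 1\<^sub>m n * phi_tau n S u v w i * 1\<^sub>m n = T i"
    if i: "i \<in> {1..n-1}" for i
  proof -
    have i1: "1 \<le> i" and i2: "i < n" using i by auto
    have Si: "S i = blockD n i M" using S i by auto
    have inv: "minv n (blockD n i M) = blockD n i N"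
    proof (rule minv_unique)
      show "blockD n i M * blockD n i N = 1\<^sub>m n"
        unfolding blockD_def using blockE_mult[OF i1 i2 M N] MN one_blockE[OF i1, of n] by simp
      show "blockD n i N * blockD n i M = 1\<^sub>m n"
        unfolding blockD_def using blockE_mult[OF i1 i2 N M] NM one_blockE[OF i1, of n] by simp
    qed (auto simp: blockD_def)
    have "phi_tau n S u v w i = blockE n i (u+v+w) (u \<cdot>\<^sub>m M + v \<cdot>\<^sub>m N + w \<cdot>\<^sub>m 1\<^sub>m 2)"
      unfolding phi_tau_def Si inv unfolding one_blockE[OF i1, of n] blockD_def
      using M N by (simp add: blockE_smult blockE_add)
    hence "T i = blockE n i (u+v+w) (u \<cdot>\<^sub>m M + v \<cdot>\<^sub>m N + w \<cdot>\<^sub>m 1\<^sub>m 2)" "phi_tau n S u v w i = T i"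
      using T i by auto
    thus ?thesis using Si inv by (simp add: blockD_def)
  qed
  show ?thesis unfolding equiv_SM_def
    by (rule bexI[of _ "1\<^sub>m n"], rule bexI[of _ "1\<^sub>m n"]) (use key in auto)
qed

lemma mat2_eq_iff: "mat2 a b c d = mat2 a' b' c' d' \<longleftrightarrow> a = a' \<and> b = b' \<and> c = c' \<and> d = d'"
  by (metis mat2_index(1-4))

lemma mat2_Z: "u \<cdot>\<^sub>m mat2 a b c d + v \<cdot>\<^sub>m mat2 a' b' c' d' + w \<cdot>\<^sub>m 1\<^sub>m 2
   = mat2 (u*a+v*a'+w) (u*b+v*b') (u*c+v*c') (u*d+v*d'+w)"
  by (simp add: mat2_one mat2_smult mat2_add)

theorem theorem3p5:
  fixes n :: nat and S :: "nat \<Rightarrow> complex mat" and u v w :: complex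
  assumes "n \<ge> 3"
    and "braid_rep n S" and "hom_2local n S" and "nontrivial_rep n S"
  shows "(\<exists>a c u' v' w'. a \<noteq> 1 \<and> c \<noteq> 0 \<and>
            equiv_SM n S (\<lambda>i. minv n (S i)) (phi_tau n S u v w)
              (\<lambda>i. blockD n i (mat2 a ((1 - a) / c) c 0))
              (\<lambda>i. minv n (blockD n i (mat2 a ((1 - a) / c) c 0)))
              (\<lambda>i. blockE n i (u' + v' + w')
                     (mat2 (u' * a + w') ((u' * (1 - a) + v') / c)
                           (u' * c + v' * c / (1 - a)) (- v' * a / (1 - a) + w'))))
       \<or> (\<exists>c d u' v' w'. d \<noteq> 1 \<and> c \<noteq> 0 \<and>
            equiv_SM n S (\<lambda>i. minv n (S i)) (phi_tau n S u v w)
              (\<lambda>i. blockD n i (mat2 0 ((1 - d) / c) c d))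
              (\<lambda>i. minv n (blockD n i (mat2 0 ((1 - d) / c) c d)))
              (\<lambda>i. blockE n i (u' + v' + w')
                     (mat2 (- v' * d / (1 - d) + w') ((u' * (1 - d) + v') / c)
                           (u' * c + v' * c / (1 - d)) (u' * d + w'))))
       \<or> (\<exists>b c u' v' w'. b \<noteq> 0 \<and> c \<noteq> 0 \<and>
            equiv_SM n S (\<lambda>i. minv n (S i)) (phi_tau n S u v w)
              (\<lambda>i. blockD n i (mat2 0 b c 0))
              (\<lambda>i. minv n (blockD n i (mat2 0 b c 0)))
              (\<lambda>i. blockE n i (u' + v' + w')
                     (mat2 w' (u' * b + v' / c) (u' * c + v' / b) w')))"
proof -
  have n: "3 \<le> n" using assms(1) .
  obtain M where M: "M \<in> carrier_mat 2 2" and SM: "\<forall>i\<in>{1..n-1}. S i = blockD n i M"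
    using assms(3) unfolding hom_2local_def by auto
  define a b c d where "a = M$$(0,0)" "b = M$$(0,1)" "c = M$$(1,0)" "d = M$$(1,1)"
  have Me: "M = mat2 a b c d" using mat2_eta[OF M] by (simp add: a_b_c_d_def)
  have S12: "S 1 = blockD n 1 M" "S 2 = blockD n 2 M" using SM n by auto
  have br0: "\<forall>i\<in>{1..n-2}. S i * S (i+1) * S i = S (i+1) * S i * S (i+1)"
    using assms(2) unfolding braid_rep_def by blast
  have "(1::nat) \<in> {1..n-2}" using n by auto
  from bspec[OF br0 this] have br: "S 1 * S 2 * S 1 = S 2 * S 1 * S 2" by (simp add: numeral_2_eq_2)
  have eqs: "a*(a+b*c-1) = 0 \<and> a*b*d = 0 \<and> a*c*d = 0 \<and> a*d*(d-a) = 0 \<and> d*(b*c+d-1) = 0"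
    using braid_eqs[OF n, of a b c d] br S12 Me by simp
  define D where "D = blockD n 1 (mat2 a b c d)"
  have Dc: "D \<in> carrier_mat n n" by (simp add: D_def blockD_def)
  have "\<forall>i\<in>{1..n-1}. S i \<in> carrier_mat n n \<and> invertible_mat (S i)"
    using assms(2) unfolding braid_rep_def by blast
  moreover have "(1::nat) \<in> {1..n-1}" using n by auto
  ultimately have "invertible_mat (S 1)" by blast
  hence invD: "invertible_mat D" using S12 Me unfolding D_def by simp
  have n0: "0 < n" "1 < n" using n by auto
  have r0: "a \<noteq> 0 \<or> b \<noteq> 0"
  proof (rule ccontr)
    assume "\<not> ?thesis"
    hence "\<forall>k<n. D $$ (0,k) = 0" using n0 by (auto simp: D_def blockD_def blockE_index le_Suc_eq)
    thus False using inv_row[OF Dc invD n0(1)] by blast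
  qed
  have r1: "c \<noteq> 0 \<or> d \<noteq> 0"
  proof (rule ccontr)
    assume "\<not> ?thesis"
    hence "\<forall>k<n. D $$ (1,k) = 0" using n0 by (auto simp: D_def blockD_def blockE_index le_Suc_eq)
    thus False using inv_row[OF Dc invD n0(2)] by blast
  qed
  have c0: "a \<noteq> 0 \<or> c \<noteq> 0"
  proof (rule ccontr)
    assume "\<not> ?thesis"
    hence "\<forall>k<n. D $$ (k,0) = 0" using n0 by (auto simp: D_def blockD_def blockE_index le_Suc_eq)
    thus False using inv_col[OF Dc invD n0(1)] by blast
  qed
  have c1: "b \<noteq> 0 \<or> d \<noteq> 0"
  proof (rule ccontr)
    assume "\<not> ?thesis"
    hence "\<forall>k<n. D $$ (k,1) = 0" using n0 by (auto simp: D_def blockD_def blockE_index le_Suc_eq)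
    thus False using inv_col[OF Dc invD n0(2)] by blast
  qed
  have SMe: "\<forall>i\<in>{1..n-1}. S i = blockD n i (mat2 a b c d)" using SM Me by simp
  consider (A) "a \<noteq> 0" "d \<noteq> 0" | (B) "a \<noteq> 0" "d = 0" | (C) "a = 0" "d \<noteq> 0" | (D) "a = 0" "d = 0"
    by blast
  then show ?thesis
  proof cases
    case A
    have bc: "b = 0" "c = 0" using eqs A by auto
    have "a + b*c - 1 = 0" "b*c + d - 1 = 0" using eqs A by auto
    hence "a = 1" "d = 1" using bc by (simp_all add: algebra_simps)
    hence "\<forall>i\<in>{1..n-1}. S i = 1\<^sub>m n" using SMe blockD_id bc by auto
    with assms(4) show ?thesis unfolding nontrivial_rep_def by auto
  next
    case B
    have cb: "c \<noteq> 0" "b \<noteq> 0" using r1 c1 B by auto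
    have "a + b*c - 1 = 0" using eqs B by auto
    hence abc: "b*c = 1 - a" by (simp add: algebra_simps)
    have a1: "a \<noteq> 1" "1 - a \<noteq> 0" using abc cb by auto
    have bq: "b = (1-a)/c" using abc cb by (simp add: field_simps)
    have "equiv_SM n S (\<lambda>i. minv n (S i)) (phi_tau n S u v w)
              (\<lambda>i. blockD n i (mat2 a ((1 - a) / c) c 0))
              (\<lambda>i. minv n (blockD n i (mat2 a ((1 - a) / c) c 0)))
              (\<lambda>i. blockE n i (u + v + w)
                     (mat2 (u * a + w) ((u * (1 - a) + v) / c)
                           (u * c + v * c / (1 - a)) (- v * a / (1 - a) + w)))"
    proof (rule equiv_main[where N = "mat2 0 (1/c) (c/(1-a)) (-a/(1-a))"])
      show "\<forall>i\<in>{1..n-1}. S i = blockD n i (mat2 a ((1 - a) / c) c 0)" using SMe bq B by simp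
      show "mat2 a ((1 - a) / c) c 0 * mat2 0 (1/c) (c/(1-a)) (-a/(1-a)) = 1\<^sub>m 2"
        using a1 cb by (simp add: mat2_mult mat2_one mat2_eq_iff field_simps)
      show "mat2 0 (1/c) (c/(1-a)) (-a/(1-a)) * mat2 a ((1 - a) / c) c 0 = 1\<^sub>m 2"
        using a1 cb by (simp add: mat2_mult mat2_one mat2_eq_iff field_simps)
      show "\<forall>i\<in>{1..n-1}. blockE n i (u + v + w)
                     (mat2 (u * a + w) ((u * (1 - a) + v) / c)
                           (u * c + v * c / (1 - a)) (- v * a / (1 - a) + w)) =
         blockE n i (u + v + w) (u \<cdot>\<^sub>m mat2 a ((1 - a) / c) c 0 + v \<cdot>\<^sub>m mat2 0 (1/c) (c/(1-a)) (-a/(1-a)) + w \<cdot>\<^sub>m 1\<^sub>m 2)"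
        using a1 cb by (simp add: mat2_Z mat2_eq_iff field_simps)
    qed simp_all
    thus ?thesis using a1 cb by blast
  next
    case C
    have cb: "c \<noteq> 0" "b \<noteq> 0" using r0 c0 C by auto
    have "b*c + d - 1 = 0" using eqs C by auto
    hence abc: "b*c = 1 - d" by (simp add: algebra_simps)
    have d1: "d \<noteq> 1" "1 - d \<noteq> 0" using abc cb by auto
    have bq: "b = (1-d)/c" using abc cb by (simp add: field_simps)
    have "equiv_SM n S (\<lambda>i. minv n (S i)) (phi_tau n S u v w)
              (\<lambda>i. blockD n i (mat2 0 ((1 - d) / c) c d))
              (\<lambda>i. minv n (blockD n i (mat2 0 ((1 - d) / c) c d)))
              (\<lambda>i. blockE n i (u + v + w)
                     (mat2 (- v * d / (1 - d) + w) ((u * (1 - d) + v) / c)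
                           (u * c + v * c / (1 - d)) (u * d + w)))"
    proof (rule equiv_main[where N = "mat2 (-d/(1-d)) (1/c) (c/(1-d)) 0"])
      show "\<forall>i\<in>{1..n-1}. S i = blockD n i (mat2 0 ((1 - d) / c) c d)" using SMe bq C by simp
      show "mat2 0 ((1 - d) / c) c d * mat2 (-d/(1-d)) (1/c) (c/(1-d)) 0 = 1\<^sub>m 2"
        using d1 cb by (simp add: mat2_mult mat2_one mat2_eq_iff field_simps)
      show "mat2 (-d/(1-d)) (1/c) (c/(1-d)) 0 * mat2 0 ((1 - d) / c) c d = 1\<^sub>m 2"
        using d1 cb by (simp add: mat2_mult mat2_one mat2_eq_iff field_simps)
      show "\<forall>i\<in>{1..n-1}. blockE n i (u + v + w)
                     (mat2 (- v * d / (1 - d) + w) ((u * (1 - d) + v) / c)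
                           (u * c + v * c / (1 - d)) (u * d + w)) =
         blockE n i (u + v + w) (u \<cdot>\<^sub>m mat2 0 ((1 - d) / c) c d + v \<cdot>\<^sub>m mat2 (-d/(1-d)) (1/c) (c/(1-d)) 0 + w \<cdot>\<^sub>m 1\<^sub>m 2)"
        using d1 cb by (simp add: mat2_Z mat2_eq_iff field_simps)
    qed simp_all
    thus ?thesis using d1 cb by blast
  next
    case D
    have cb: "c \<noteq> 0" "b \<noteq> 0" using r0 r1 D by auto
    have "equiv_SM n S (\<lambda>i. minv n (S i)) (phi_tau n S u v w)
              (\<lambda>i. blockD n i (mat2 0 b c 0))
              (\<lambda>i. minv n (blockD n i (mat2 0 b c 0)))
              (\<lambda>i. blockE n i (u + v + w)
                     (mat2 w (u * b + v / c) (u * c + v / b) w))"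
    proof (rule equiv_main[where N = "mat2 0 (1/c) (1/b) 0"])
      show "\<forall>i\<in>{1..n-1}. S i = blockD n i (mat2 0 b c 0)" using SMe D by simp
      show "mat2 0 b c 0 * mat2 0 (1/c) (1/b) 0 = 1\<^sub>m 2"
        using cb by (simp add: mat2_mult mat2_one mat2_eq_iff field_simps)
      show "mat2 0 (1/c) (1/b) 0 * mat2 0 b c 0 = 1\<^sub>m 2"
        using cb by (simp add: mat2_mult mat2_one mat2_eq_iff field_simps)
      show "\<forall>i\<in>{1..n-1}. blockE n i (u + v + w) (mat2 w (u * b + v / c) (u * c + v / b) w) =
         blockE n i (u + v + w) (u \<cdot>\<^sub>m mat2 0 b c 0 + v \<cdot>\<^sub>m mat2 0 (1/c) (1/b) 0 + w \<cdot>\<^sub>m 1\<^sub>m 2)"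
        using cb by (simp add: mat2_Z mat2_eq_iff field_simps)
    qed simp_all
    thus ?thesis using cb by blast
  qed
qed

end
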